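(* Let $\{\mathbf{y}(k)\}_{k\in\mathbb{Z}_+}$ be generated by the distributed quantized average consensus and weight-balancing algorithm described in the context on a strongly connected digraph, under the stated step-size and range conditions. Then for each $i\in\mathcal{V}$ there exist $y_{i,\min},y_{i,\max}\in\mathbb{R}$ such that $y_{i,\min}\le y_i(k)\le y_{i,\max}$ for all $k\in\mathbb{Z}_+$.
   Context: $\mathcal{G}=(\mathcal{V},\mathcal{E})$, $\mathcal{V}=\{1,\dots,N\}$, no self-loops, strongly connected; $\mathcal{N}_i^-=\{j:(j,i)\in\mathcal{E}\}$, $\mathcal{N}_i^+=\{j:(i,j)\in\mathcal{E}\}$, $d_i^+=|\mathcal{N}_i^+|$. Algorithm: given $q_{\min}<q_{\max}$ and initial values $y_i(0)$ with $\bar y(0)=\frac1N\sum_i y_i(0)\in[q_{\min},q_{\max}]$; $a_{ij}(0)=1$ if $j\in\mathcal{N}_i^-$, else $0$. $\gamma(k)=2^{-n}$ for $2^n-1\le k\le 2^{n+1}-2$; $\alpha(k)>0$ nonincreasing with $\sum\alpha(k)=\infty$, $\sum\alpha(k)^2<\infty$. At step $k$: $b_i(k)=\sum_{j\in\mathcal{N}_i^-}a_{ij}(k)-\sum_{j\in\mathcal{N}_i^+}a_{ji}(k)$; $n_i(k)=\mathcal{I}\{b_i(k)\ge d_i^+\gamma(k)\}$; $\tilde y_i(k)=\min\{\max\{y_i(k),q_{\min}\},q_{\max}\}$; $x_i(k)=q_{\max}$ with probability $p_i(k)=\frac{\tilde y_i(k)-q_{\min}}{q_{\max}-q_{\min}}$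 and $q_{\min}$ otherwise; $a_{ij}(k+1)=a_{ij}(k)+n_j(k)\gamma(k)$ for $j\in\mathcal{N}_i^-$; $y_i(k+1)=y_i(k)+\alpha(k)\sum_{j\in\mathcal{N}_i^-}a_{ij}(k)(x_j(k)-x_i(k))+\alpha(k)b_i(k)x_i(k)$. *)

theory Defs
  imports Complex_Main
begin

definition in_nbrs :: "('v \<times> 'v) set \<Rightarrow> 'v \<Rightarrow> 'v set" where
  "in_nbrs E i = {j. (j, i) \<in> E}"

definition out_nbrs :: "('v \<times> 'v) set \<Rightarrow> 'v \<Rightarrow> 'v set" where
  "out_nbrs E i = {j. (i, j) \<in> E}"

definition out_deg :: "('v \<times> 'v) set \<Rightarrow> 'v \<Rightarrow> nat" where
  "out_deg E i = card (out_nbrs E i)"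

definition gamma :: "nat \<Rightarrow> real" where
  "gamma k = 1 / 2 ^ (THE n::nat. 2 ^ n - 1 \<le> k \<and> k \<le> 2 ^ (n + 1) - 2)"

text \<open>imbalance b_i(k) = in-weight minus out-weight, a k i j is the weight on edge (j,i)\<close>
definition imbalance :: "('v \<times> 'v) set \<Rightarrow> (nat \<Rightarrow> 'v \<Rightarrow> 'v \<Rightarrow> real) \<Rightarrow> nat \<Rightarrow> 'v \<Rightarrow> real" where
  "imbalance E a k i = (\<Sum>j\<in>in_nbrs E i. a k i j) - (\<Sum>j\<in>out_nbrs E i. a k j i)"

definition nind :: "('v \<times> 'v) set \<Rightarrow> (nat \<Rightarrow> 'v \<Rightarrow> 'v \<Rightarrow> real) \<Rightarrow> nat \<Rightarrow> 'v \<Rightarrow> real" where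
  "nind E a k i = (if imbalance E a k i \<ge> real (out_deg E i) * gamma k then 1 else 0)"

definition clip :: "real \<Rightarrow> real \<Rightarrow> real \<Rightarrow> real" where
  "clip qmin qmax v = min (max v qmin) qmax"

definition quant_prob :: "real \<Rightarrow> real \<Rightarrow> real \<Rightarrow> real" where
  "quant_prob qmin qmax v = (clip qmin qmax v - qmin) / (qmax - qmin)"

end

theory Submission
  imports Defs "HOL-Analysis.Analysis"
begin



lemma gamma_eq:
  assumes "2^n \<le> k+1" "k+1 < (2::nat)^(n+1)"
  shows "gamma k = 1 / 2^n"
proof -
  have P: "2 ^ n - 1 \<le> k \<and> k \<le> 2 ^ (n + 1) - 2" using assms by auto
  have "(THE n::nat. 2 ^ n - 1 \<le> k \<and> k \<le> 2 ^ (n + 1) - 2) = n"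
  proof (rule the_equality)
    show "2 ^ n - 1 \<le> k \<and> k \<le> 2 ^ (n + 1) - 2" by (rule P)
  next
    fix m assume "2 ^ m - 1 \<le> k \<and> k \<le> 2 ^ (m + 1) - (2::nat)"
    moreover have "(1::nat) \<le> 2^m" by simp
    moreover have "(2::nat) \<le> 2^(m+1)" by (metis Suc_eq_plus1 le_add1 power_increasing power_one_right zero_less_Suc less_2_cases_iff one_le_numeral power_Suc self_le_power Suc_le_eq)
    ultimately have m1: "2^m \<le> k+1" "k+1 < (2::nat)^(m+1)" by linarith+
    show "m = n"
    proof (rule ccontr)
      assume "m \<noteq> n"
      then consider "m < n" | "n < m" by linarith
      then show False
      proof cases
        case 1 hence "(2::nat)^(m+1) \<le> 2^n" by (intro power_increasing) auto
        thus False using m1 assms by linarith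
      next
        case 2 hence "(2::nat)^(n+1) \<le> 2^m" by (intro power_increasing) auto
        thus False using m1 assms by linarith
      qed
    qed
  qed
  thus ?thesis unfolding gamma_def by simp
qed

lemma gamma_bounds: "gamma k > 0 \<and> 1 / (real k + 1) \<le> gamma k \<and> gamma k \<le> 2 / (real k + 1)"
proof -
  obtain n where n: "2^n \<le> k+1" "k+1 < (2::nat)^(n+1)"
    using ex_power_ivl1[of 2 "k+1"] by auto
  have g: "gamma k = 1/2^n" by (rule gamma_eq[OF n])
  have r1: "(2::real)^n \<le> real k + 1" using n(1)
    by (metis of_nat_1 of_nat_add of_nat_le_iff of_nat_numeral of_nat_power)
  have r2: "real k + 1 \<le> 2 * 2^n" using n(2)
    by (metis (mono_tags, lifting) less_imp_le of_nat_1 of_nat_add of_nat_le_iff of_nat_numeral of_nat_power power_Suc Suc_eq_plus1)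
  show ?thesis unfolding g using r1 r2
    by (auto simp: field_simps)
qed




lemma sum_in_swap:
  fixes E :: "('v::finite \<times> 'v) set" and u :: "'v \<Rightarrow> real"
  shows "(\<Sum>i\<in>UNIV. \<Sum>j\<in>in_nbrs E i. u j) = (\<Sum>j\<in>UNIV. real (out_deg E j) * u j)"
proof -
  have "(\<Sum>i\<in>UNIV. \<Sum>j\<in>in_nbrs E i. u j) = (\<Sum>i\<in>UNIV. \<Sum>j\<in>UNIV. if (j,i) \<in> E then u j else 0)"
    by (simp add: in_nbrs_def sum.inter_filter[symmetric])
  also have "\<dots> = (\<Sum>j\<in>UNIV. \<Sum>i\<in>UNIV. if (j,i) \<in> E then u j else 0)" by (rule sum.swap)
  also have "\<dots> = (\<Sum>j\<in>UNIV. real (out_deg E j) * u j)"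
  proof (rule sum.cong[OF refl])
    fix j
    have "(\<Sum>i\<in>UNIV. if (j,i) \<in> E then u j else 0) = (\<Sum>i\<in>out_nbrs E j. u j)"
      by (simp add: out_nbrs_def sum.inter_filter[symmetric])
    thus "(\<Sum>i\<in>UNIV. if (j,i) \<in> E then u j else 0) = real (out_deg E j) * u j"
      by (simp add: out_deg_def)
  qed
  finally show ?thesis .
qed

lemma zero_propagate:
  fixes E :: "('v \<times> 'v) set" and z :: "'v \<Rightarrow> real"
  assumes step: "\<And>i j. z i = 0 \<Longrightarrow> (j,i) \<in> E \<Longrightarrow> z j = 0"
    and "(j, i) \<in> E\<^sup>*" and "z i = 0"
  shows "z j = 0"
  using assms(2,3)
proof (induction rule: converse_rtrancl_induct)
  case base then show ?case by simp
next
  case (step y w) then show ?case using assms(1) by blast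
qed

lemma kernel_vector:
  fixes E :: "('v::finite \<times> 'v) set"
  assumes sc: "\<And>i j. (i, j) \<in> E\<^sup>*"
  shows "\<exists>v::'v\<Rightarrow>real. (\<forall>i. v i > 0) \<and> (\<forall>i. (\<Sum>j\<in>in_nbrs E i. v j) = real (out_deg E i) * v i)"
proof -
  define f :: "real^'v \<Rightarrow> real^'v" where
    "f u = (\<chi> i. (\<Sum>j\<in>in_nbrs E i. u$j) - real (out_deg E i) * u$i)" for u
  have lin: "linear f"
    by (rule linearI) (simp_all add: f_def vec_eq_iff sum.distrib sum_distrib_left algebra_simps)
  have sum0: "(\<Sum>i\<in>UNIV. f u $ i) = 0" for u
    by (simp add: f_def sum_subtractf sum_in_swap)
  have "\<not> surj f"
  proof
    assume "surj f"
    then obtain u where "f u = (\<chi> i. 1)" by (metis surjD)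
    hence "(\<Sum>i\<in>UNIV. f u $ i) = real (card (UNIV::'v set))" by simp
    with sum0[of u] show False by simp
  qed
  hence "\<not> inj f" using linear_injective_imp_surjective[OF lin] by blast
  then obtain u where u: "f u = 0" "u \<noteq> 0" using linear_injective_0[OF lin] by blast
  define z where "z i = \<bar>u$i\<bar>" for i
  have ge: "(\<Sum>j\<in>in_nbrs E i. z j) - real (out_deg E i) * z i \<ge> 0" for i
  proof -
    have "(\<Sum>j\<in>in_nbrs E i. u$j) = real (out_deg E i) * u$i"
      using u(1) by (simp add: f_def vec_eq_iff)
    hence "real (out_deg E i) * z i = \<bar>\<Sum>j\<in>in_nbrs E i. u$j\<bar>" by (simp add: z_def abs_mult)
    also have "\<dots> \<le> (\<Sum>j\<in>in_nbrs E i. z j)" unfolding z_def by (rule sum_abs)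
    finally show ?thesis by simp
  qed
  have "(\<Sum>i\<in>UNIV. (\<Sum>j\<in>in_nbrs E i. z j) - real (out_deg E i) * z i) = 0"
    by (simp add: sum_subtractf sum_in_swap)
  hence eq: "(\<Sum>j\<in>in_nbrs E i. z j) = real (out_deg E i) * z i" for i
    using sum_nonneg_eq_0_iff[of UNIV "\<lambda>i. (\<Sum>j\<in>in_nbrs E i. z j) - real (out_deg E i) * z i"] ge
    by auto
  have znn: "z i \<ge> 0" for i by (simp add: z_def)
  have stepz: "z j = 0" if "z i = 0" "(j,i) \<in> E" for i j
  proof -
    have "(\<Sum>j\<in>in_nbrs E i. z j) = 0" using eq[of i] that(1) by simp
    moreover have "j \<in> in_nbrs E i" using that(2) by (simp add: in_nbrs_def)
    ultimately show ?thesis using sum_nonneg_eq_0_iff[of "in_nbrs E i" z] znn by auto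
  qed
  obtain i0 where "u$i0 \<noteq> 0" using u(2) by (metis vec_eq_iff zero_index)
  hence "z i0 \<noteq> 0" by (simp add: z_def)
  have pos: "z i > 0" for i
  proof (rule ccontr)
    assume "\<not> z i > 0"
    hence "z i = 0" using znn[of i] by linarith
    have st: "\<And>i j. z i = 0 \<Longrightarrow> (j,i) \<in> E \<Longrightarrow> z j = 0" using stepz by blast
    have "z i0 = 0" using zero_propagate[where z=z and E=E and j=i0 and i=i, OF st sc[of i0 i] \<open>z i = 0\<close>] .
    with \<open>z i0 \<noteq> 0\<close> show False by simp
  qed
  show ?thesis using pos eq by blast
qed




locale wb =
  fixes E :: "('v::finite \<times> 'v) set" and a :: "nat \<Rightarrow> 'v \<Rightarrow> 'v \<Rightarrow> real" and v :: "'v \<Rightarrow> real"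
  assumes sc: "\<And>i j. (i, j) \<in> E\<^sup>*"
    and a_init: "\<And>i j. a 0 i j = (if (j, i) \<in> E then 1 else 0)"
    and a_step: "\<And>k i j. (j, i) \<in> E \<Longrightarrow> a (Suc k) i j = a k i j + nind E a k j * gamma k"
    and dpos: "\<And>i. out_deg E i \<ge> 1"
    and vpos: "\<And>i. v i > 0"
    and veq: "\<And>i. (\<Sum>j\<in>in_nbrs E i. v j) = real (out_deg E i) * v i"
begin

definition W where "W k j = 1 + (\<Sum>t<k. nind E a t j * gamma t)"

lemma nind01: "nind E a k j = 0 \<or> nind E a k j = 1" by (simp add: nind_def)

lemma nind_nonneg: "nind E a k j \<ge> 0" by (simp add: nind_def)

lemma W_Suc: "W (Suc k) j = W k j + nind E a k j * gamma k" by (simp add: W_def)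

lemma W_0: "W 0 j = 1" by (simp add: W_def)

lemma a_W: "(j,i) \<in> E \<Longrightarrow> a k i j = W k j"
  by (induction k) (simp_all add: a_init a_step W_Suc W_0)

lemma b_eq: "imbalance E a k i = (\<Sum>j\<in>in_nbrs E i. W k j) - real (out_deg E i) * W k i"
proof -
  have 1: "(\<Sum>j\<in>in_nbrs E i. a k i j) = (\<Sum>j\<in>in_nbrs E i. W k j)"
    by (rule sum.cong) (auto simp: in_nbrs_def a_W)
  have "(\<Sum>j\<in>out_nbrs E i. a k j i) = (\<Sum>j\<in>out_nbrs E i. W k i)"
    by (rule sum.cong) (auto simp: out_nbrs_def a_W)
  also have "\<dots> = real (out_deg E i) * W k i" by (simp add: out_deg_def)
  finally show ?thesis using 1 by (simp add: imbalance_def)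
qed

lemma W_ge1: "W k j \<ge> 1"
proof -
  have "(\<Sum>t<k. nind E a t j * gamma t) \<ge> 0"
    by (intro sum_nonneg mult_nonneg_nonneg nind_nonneg) (use gamma_bounds in \<open>auto intro: less_imp_le\<close>)
  thus ?thesis by (simp add: W_def)
qed

lemma fire_cond: "nind E a k j = 1 \<Longrightarrow> imbalance E a k j \<ge> real (out_deg E j) * gamma k"
  by (simp add: nind_def split: if_splits)

lemma nofire_cond: "nind E a k j = 0 \<Longrightarrow> imbalance E a k j < real (out_deg E j) * gamma k"
  by (simp add: nind_def split: if_splits)

lemma invariant:
  assumes "\<forall>j. W k j \<le> \<rho> * v j"
  shows "W (k+m) j \<le> \<rho> * v j"
proof (induction m arbitrary: j)
  case 0 then show ?case using assms by simp
next
  case (Suc m)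
  show ?case
  proof (cases "nind E a (k+m) j = 0")
    case True then show ?thesis using Suc.IH[of j] by (simp add: W_Suc)
  next
    case False
    hence n1: "nind E a (k+m) j = 1" using nind01 by blast
    have c: "(\<Sum>l\<in>in_nbrs E j. W (k+m) l) - real (out_deg E j) * W (k+m) j \<ge> real (out_deg E j) * gamma (k+m)"
      using fire_cond[OF n1] by (simp add: b_eq)
    have "(\<Sum>l\<in>in_nbrs E j. W (k+m) l) \<le> (\<Sum>l\<in>in_nbrs E j. \<rho> * v l)"
      by (rule sum_mono) (rule Suc.IH)
    also have "\<dots> = \<rho> * (real (out_deg E j) * v j)" by (simp add: sum_distrib_left[symmetric] veq)
    finally have "real (out_deg E j) * (W (k+m) j + gamma (k+m)) \<le> real (out_deg E j) * (\<rho> * v j)"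
      using c by (simp add: algebra_simps)
    hence "W (k+m) j + gamma (k+m) \<le> \<rho> * v j"
      using dpos[of j] by (simp add: mult_le_cancel_left)
    then show ?thesis using n1 by (simp add: W_Suc)
  qed
qed

definition R where "R k = Max (range (\<lambda>j. W k j / v j))"

lemma W_le_R: "W k j \<le> R k * v j"
proof -
  have "W k j / v j \<le> R k" unfolding R_def by (rule Max_ge) auto
  thus ?thesis using vpos[of j] by (simp add: divide_le_eq)
qed

lemma R_att: "\<exists>j. W k j = R k * v j"
proof -
  have "R k \<in> range (\<lambda>j. W k j / v j)" unfolding R_def by (rule Max_in) auto
  then obtain j where "R k = W k j / v j" by auto
  hence "W k j = R k * v j" using vpos[of j] by simp
  thus ?thesis by blast
qed

lemma R_mono: "R (Suc k) \<le> R k"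
proof -
  have "W (Suc k) j / v j \<le> R k" for j
    using invariant[of k "R k" 1 j] W_le_R vpos[of j] by (simp add: divide_le_eq)
  thus ?thesis unfolding R_def by (intro Max.boundedI) auto
qed

lemma W_bound: "W k j \<le> R 0 * v j"
  using invariant[of 0 "R 0" k j] W_le_R by simp

definition Psi where "Psi k = (\<Sum>j\<in>UNIV. R k * v j - W k j)"

lemma Psi_nonneg: "Psi k \<ge> 0"
  unfolding Psi_def by (intro sum_nonneg) (simp add: W_le_R)

lemma Psi_Suc: "Psi (Suc k) \<le> Psi k - gamma k * (\<Sum>j\<in>UNIV. nind E a k j)"
proof -
  have "R (Suc k) * v j - W (Suc k) j \<le> (R k * v j - W k j) - gamma k * nind E a k j" for j
    using R_mono[of k] vpos[of j] by (simp add: W_Suc algebra_simps mult_right_mono)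
  hence "Psi (Suc k) \<le> (\<Sum>j\<in>UNIV. (R k * v j - W k j) - gamma k * nind E a k j)"
    unfolding Psi_def by (rule sum_mono)
  thus ?thesis by (simp add: Psi_def sum_subtractf sum_distrib_left)
qed

lemma b_le_Psi: "\<bar>imbalance E a k i\<bar> \<le> (real (out_deg E i) + 1) * Psi k"
proof -
  define U where "U j = R k * v j - W k j" for j
  have U0: "U j \<ge> 0" for j by (simp add: U_def W_le_R)
  have "imbalance E a k i = real (out_deg E i) * U i - (\<Sum>j\<in>in_nbrs E i. U j)"
  proof -
    have "(\<Sum>j\<in>in_nbrs E i. U j) = R k * (real (out_deg E i) * v i) - (\<Sum>j\<in>in_nbrs E i. W k j)"
      by (simp add: U_def sum_subtractf sum_distrib_left[symmetric] veq)
    thus ?thesis by (simp add: b_eq U_def algebra_simps)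
  qed
  hence "\<bar>imbalance E a k i\<bar> \<le> real (out_deg E i) * U i + (\<Sum>j\<in>in_nbrs E i. U j)"
    using U0 sum_nonneg[of "in_nbrs E i" U] by (simp add: abs_le_iff)
  also have "\<dots> \<le> real (out_deg E i) * Psi k + Psi k"
  proof (rule add_mono)
    have "U i \<le> Psi k" unfolding Psi_def U_def[symmetric]
      by (rule member_le_sum) (auto simp: U0)
    thus "real (out_deg E i) * U i \<le> real (out_deg E i) * Psi k" by (simp add: mult_left_mono)
    show "(\<Sum>j\<in>in_nbrs E i. U j) \<le> Psi k" unfolding Psi_def U_def[symmetric]
      by (rule sum_mono2) (auto simp: U0)
  qed
  finally show ?thesis by (simp add: algebra_simps)
qed

end



context wb begin

definition Fc where "Fc = (real (card (UNIV::'v set)) + 1) ^ card E - 1"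
definition cv where "cv = Max (range (\<lambda>j. 1 / v j))"
definition Cst where "Cst = Fc * cv * (\<Sum>j\<in>UNIV. v j)"

lemma Psi_small:
  assumes nf: "\<And>i. nind E a k i = 0"
  shows "Psi k \<le> Cst * gamma k"
proof -
  define D where "D = real (card (UNIV::'v set))"
  define r where "r = Min (range (\<lambda>j. W k j / v j))"
  have r_le: "r \<le> W k j / v j" for j unfolding r_def by (rule Min_le) auto
  have "r \<in> range (\<lambda>j. W k j / v j)" unfolding r_def by (rule Min_in) auto
  then obtain j0 where j0: "r = W k j0 / v j0" by auto
  define z where "z j = W k j - r * v j" for j
  have z0: "z j \<ge> 0" for j using r_le[of j] vpos[of j] by (simp add: z_def le_divide_eq)
  have zj0: "z j0 = 0" using j0 vpos[of j0] by (simp add: z_def)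
  have g0: "gamma k > 0" using gamma_bounds by blast
  have sumz: "(\<Sum>j\<in>in_nbrs E l. z j) = imbalance E a k l + real (out_deg E l) * z l" for l
  proof -
    have "(\<Sum>j\<in>in_nbrs E l. z j) = (\<Sum>j\<in>in_nbrs E l. W k j) - r * (real (out_deg E l) * v l)"
      by (simp add: z_def sum_subtractf sum_distrib_left[symmetric] veq)
    thus ?thesis by (simp add: b_eq z_def algebra_simps)
  qed
  have dD: "real (out_deg E l) \<le> D" for l
    unfolding D_def out_deg_def using card_mono[of UNIV "out_nbrs E l"] by simp
  have D0: "D \<ge> 0" by (simp add: D_def)
  have path: "(j, j0) \<in> E ^^ m \<Longrightarrow> z j \<le> ((D+1)^m - 1) * gamma k" for m j
  proof (induction m arbitrary: j)
    case 0
    hence "j = j0" by simp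
    then show ?case using zj0 by simp
  next
    case (Suc m)
    from relpow_Suc_D2[OF Suc.prems] obtain l where l: "(j,l) \<in> E" "(l,j0) \<in> E ^^ m" by blast
    have IH: "z l \<le> ((D+1)^m - 1) * gamma k" using Suc.IH[OF l(2)] .
    have "z j \<le> (\<Sum>j\<in>in_nbrs E l. z j)"
      by (rule member_le_sum) (use l(1) z0 in \<open>auto simp: in_nbrs_def\<close>)
    also have "\<dots> < real (out_deg E l) * gamma k + real (out_deg E l) * z l"
      using sumz[of l] nofire_cond[OF nf[of l]] by simp
    also have "\<dots> = real (out_deg E l) * (gamma k + z l)" by (simp add: algebra_simps)
    also have "\<dots> \<le> D * (gamma k + ((D+1)^m - 1) * gamma k)"
      by (rule mult_mono) (use dD IH g0 z0 D0 in \<open>auto intro: add_nonneg_nonneg less_imp_le\<close>)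
    also have "\<dots> = D * (D+1)^m * gamma k" by (simp add: algebra_simps)
    also have "\<dots> \<le> ((D+1)^Suc m - 1) * gamma k"
    proof -
      have "1 \<le> (D+1)^m" using D0 by (simp add: one_le_power)
      hence "D * (D+1)^m \<le> (D+1)^Suc m - 1" by (simp add: algebra_simps)
      thus ?thesis using g0 by (simp add: mult_right_mono)
    qed
    finally show ?case by (rule less_imp_le)
  qed
  have finE: "finite E" by simp
  have zF: "z j \<le> Fc * gamma k" for j
  proof -
    have "(j, j0) \<in> E\<^sup>*" by (rule sc)
    then obtain m where m: "m \<le> card E" "(j,j0) \<in> E ^^ m"
      using rtrancl_finite_eq_relpow[OF finE] by blast
    have "z j \<le> ((D+1)^m - 1) * gamma k" using path[OF m(2)] .
    also have "\<dots> \<le> Fc * gamma k"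
    proof -
      have "(D+1)^m \<le> (D+1)^card E" using m(1) D0 by (intro power_increasing) auto
      hence "(D+1)^m - 1 \<le> Fc" by (simp add: Fc_def D_def)
      thus ?thesis using g0 by (intro mult_right_mono) auto
    qed
    finally show ?thesis .
  qed
  obtain j1 where j1: "W k j1 = R k * v j1" using R_att by blast
  have Rr: "R k - r = z j1 / v j1" using j1 vpos[of j1] by (simp add: z_def field_simps)
  have cv: "1 / v j1 \<le> cv" unfolding cv_def by (rule Max_ge) auto
  have Fc0: "Fc \<ge> 0" unfolding Fc_def by (simp add: one_le_power)
  have Rr2: "R k - r \<le> Fc * gamma k * cv"
  proof -
    have "R k - r = z j1 * (1 / v j1)" using Rr by simp
    also have "\<dots> \<le> Fc * gamma k * cv"
      by (rule mult_mono) (use zF cv Fc0 g0 z0 vpos[of j1] in \<open>auto intro: mult_nonneg_nonneg less_imp_le\<close>)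
    finally show ?thesis .
  qed
  have "Psi k = (\<Sum>j\<in>UNIV. (R k - r) * v j - z j)"
    unfolding Psi_def by (rule sum.cong) (auto simp: z_def algebra_simps)
  also have "\<dots> \<le> (\<Sum>j\<in>UNIV. (R k - r) * v j)" by (rule sum_mono) (use z0 in auto)
  also have "\<dots> = (R k - r) * (\<Sum>j\<in>UNIV. v j)" by (simp add: sum_distrib_left)
  also have "\<dots> \<le> Fc * gamma k * cv * (\<Sum>j\<in>UNIV. v j)"
    by (rule mult_right_mono[OF Rr2]) (intro sum_nonneg, use vpos in \<open>auto intro: less_imp_le\<close>)
  also have "\<dots> = Cst * gamma k" by (simp add: Cst_def algebra_simps)
  finally show ?thesis .
qed

lemma Cst_nonneg: "Cst \<ge> 0"
proof -
  have "Fc \<ge> 0" unfolding Fc_def by (simp add: one_le_power)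
  moreover have "cv \<ge> 0"
  proof -
    have "1 / v undefined \<le> cv" unfolding cv_def by (rule Max_ge) auto
    moreover have "1 / v undefined > 0" using vpos[of undefined] by simp
    ultimately show ?thesis by linarith
  qed
  moreover have "(\<Sum>j\<in>UNIV. v j) \<ge> 0" by (intro sum_nonneg) (use vpos in \<open>auto intro: less_imp_le\<close>)
  ultimately show ?thesis unfolding Cst_def by simp
qed

lemma Psi_dich: "Psi k \<le> Cst * gamma k \<or> Psi (Suc k) \<le> Psi k - gamma k"
proof (cases "\<forall>i. nind E a k i = 0")
  case True then show ?thesis using Psi_small by blast
next
  case False
  then obtain i where "nind E a k i = 1" using nind01 by blast
  hence "(\<Sum>j\<in>UNIV. nind E a k j) \<ge> 1"
    using member_le_sum[of i UNIV "nind E a k"] nind_nonneg by simp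
  hence "gamma k * (\<Sum>j\<in>UNIV. nind E a k j) \<ge> gamma k"
    using gamma_bounds[of k] by (simp add: mult_le_cancel_left1)
  then show ?thesis using Psi_Suc[of k] by simp
qed

lemma Psi_mono: "Psi (Suc k) \<le> Psi k"
proof -
  have "gamma k * (\<Sum>j\<in>UNIV. nind E a k j) \<ge> 0"
    using gamma_bounds[of k] by (intro mult_nonneg_nonneg sum_nonneg nind_nonneg) auto
  thus ?thesis using Psi_Suc[of k] by simp
qed

end



lemma harm_unbounded:
  fixes K0 :: nat
  shows "\<not> (\<forall>m. (\<Sum>t<m. 1 / (real (K0 + t) + 1)) \<le> B)"
proof
  assume bnd: "\<forall>m. (\<Sum>t<m. 1 / (real (K0 + t) + 1)) \<le> B"
  have "summable (\<lambda>t. 1 / (real (K0 + t) + 1))"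
    by (rule summableI_nonneg_bounded[where x=B]) (use bnd in auto)
  hence "summable (\<lambda>t. inverse (real (t + Suc K0)))"
    by (simp add: inverse_eq_divide add.commute)
  hence "summable (\<lambda>n. inverse (real n))" using summable_iff_shift[of "\<lambda>n. inverse (real n)" "Suc K0"] by simp
  thus False using not_summable_harmonic[where 'a=real] by simp
qed

lemma seq_bound:
  fixes P g :: "nat \<Rightarrow> real"
  assumes P0: "\<And>k. P k \<ge> 0" and Pm: "\<And>k. P (Suc k) \<le> P k"
   and gl: "\<And>k. 1/(real k+1) \<le> g k" and gu: "\<And>k. g k \<le> 2/(real k+1)"
   and dich: "\<And>k. P k \<le> C * g k \<or> P (Suc k) \<le> P k - g k" and C0: "C \<ge> 0"
  shows "\<exists>A K. \<forall>k\<ge>K. P k \<le> A / (real k + 1)"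
proof -
  define A where "A = 4*C + 2"
  define K0 where "K0 = nat \<lceil>A\<rceil>"
  have ex: "\<exists>K\<ge>K0. P K \<le> C * g K"
  proof (rule ccontr)
    assume "\<not> ?thesis"
    hence bad: "P (Suc k) \<le> P k - g k" if "k \<ge> K0" for k using dich[of k] that by auto
    have dec: "P (K0+m) \<le> P K0 - (\<Sum>t<m. 1 / (real (K0 + t) + 1))" for m
    proof (induction m)
      case 0 then show ?case by simp
    next
      case (Suc m)
      have "P (K0 + Suc m) \<le> P (K0+m) - g (K0+m)" using bad[of "K0+m"] by simp
      also have "\<dots> \<le> P (K0+m) - 1 / (real (K0 + m) + 1)" using gl[of "K0+m"] by simp
      finally show ?case using Suc.IH by simp
    qed
    have "(\<Sum>t<m. 1 / (real (K0 + t) + 1)) \<le> P K0" for m using dec[of m] P0[of "K0+m"] by linarith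
    thus False using harm_unbounded[of K0 "P K0"] by blast
  qed
  then obtain K where K: "K \<ge> K0" "P K \<le> C * g K" by blast
  have KA: "real K \<ge> A" using K(1) unfolding K0_def by linarith
  have main: "P (K+m) \<le> A / (real (K+m) + 1)" for m
  proof (induction m)
    case 0
    have "P K \<le> C * g K" by (rule K(2))
    also have "\<dots> \<le> C * (2 / (real K + 1))" using gu[of K] C0 by (rule mult_left_mono)
    also have "\<dots> \<le> A / (real K + 1)" unfolding A_def using C0 by (simp add: divide_right_mono)
    finally show ?case by simp
  next
    case (Suc m)
    define k where "k = K + m"
    have kA: "real k \<ge> A" using KA by (simp add: k_def)
    have IH: "P k \<le> A / (real k + 1)" using Suc.IH by (simp add: k_def)
    have goal: "P (Suc k) \<le> A / (real k + 2)"
    proof (cases "P k \<le> C * g k")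
      case True
      have "P (Suc k) \<le> C * g k" using Pm[of k] True by linarith
      also have "\<dots> \<le> C * (2 / (real k + 1))" using gu[of k] C0 by (rule mult_left_mono)
      also have "\<dots> \<le> A / (real k + 2)"
      proof -
        have "2 * C * (real k + 2) \<le> A * (real k + 1)" unfolding A_def using C0
          by (simp add: algebra_simps)
        thus ?thesis by (simp add: field_simps)
      qed
      finally show ?thesis .
    next
      case False
      hence "P (Suc k) \<le> P k - g k" using dich[of k] by auto
      also have "\<dots> \<le> A / (real k + 1) - 1 / (real k + 1)" using IH gl[of k] by linarith
      also have "\<dots> \<le> A / (real k + 2)"
      proof -
        have "(A - 1) * (real k + 2) \<le> A * (real k + 1)" using kA by (simp add: algebra_simps)
        thus ?thesis by (simp add: field_simps diff_divide_distrib[symmetric])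
      qed
      finally show ?thesis .
    qed
    thus ?case by (simp add: k_def add.commute add.left_commute)
  qed
  show ?thesis
  proof (intro exI allI impI)
    fix k assume "k \<ge> K"
    then obtain m where "k = K + m" using le_Suc_ex by blast
    thus "P k \<le> A / (real k + 1)" using main by simp
  qed
qed




lemma y_upper_gen:
  fixes y inc \<beta> :: "nat \<Rightarrow> real"
  assumes ys: "\<And>k. y (Suc k) = y k + inc k"
    and hi: "\<And>k. y k \<ge> q \<Longrightarrow> inc k \<le> \<beta> k"
    and ib: "\<And>k. inc k \<le> Mb" and b0: "\<And>k. \<beta> k \<ge> 0" and sb: "summable \<beta>"
  shows "y k \<le> max (y 0) (q + Mb) + suminf \<beta>"
proof -
  have part: "y k \<le> max (y 0) (q + Mb) + (\<Sum>t<k. \<beta> t)" for k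
  proof (induction k)
    case 0 then show ?case by simp
  next
    case (Suc k)
    have ps: "(\<Sum>t<k. \<beta> t) \<ge> 0" by (intro sum_nonneg) (use b0 in auto)
    show ?case
    proof (cases "y k \<ge> q")
      case True
      then show ?thesis using ys[of k] hi[of k] Suc.IH by simp
    next
      case False
      hence "y (Suc k) \<le> q + Mb" using ys[of k] ib[of k] by simp
      moreover have "(\<Sum>t<Suc k. \<beta> t) \<ge> 0" by (intro sum_nonneg) (use b0 in auto)
      ultimately show ?thesis by linarith
    qed
  qed
  have "(\<Sum>t<k. \<beta> t) \<le> suminf \<beta>" by (rule sum_le_suminf[OF sb]) (use b0 in auto)
  thus ?thesis using part[of k] by linarith
qed

lemma sq_summable: "summable (\<lambda>k. (1 / (real k + 1))^2)"
proof -
  have "summable (\<lambda>n. inverse (real n ^ 2))" by (rule inverse_power_summable) simp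
  hence "summable (\<lambda>n. inverse (real (n + 1) ^ 2))" using summable_iff_shift[of "\<lambda>n. inverse (real n ^ 2)" 1] by simp
  thus ?thesis by (simp add: power_divide inverse_eq_divide add.commute)
qed

lemma amgm_bound: fixes p q :: real shows "p * q \<le> p^2 + q^2"
proof -
  have "0 \<le> (p - q)^2" by simp
  hence "2*(p*q) \<le> p^2 + q^2" by (simp add: power2_eq_square algebra_simps)
  moreover have "0 \<le> p^2" "0 \<le> q^2" by simp_all
  ultimately show ?thesis by linarith
qed




theorem lemma10:
  fixes E :: "('v::finite \<times> 'v) set"
    and qmin qmax :: real
    and alpha :: "nat \<Rightarrow> real"
    and a :: "nat \<Rightarrow> 'v \<Rightarrow> 'v \<Rightarrow> real"
    and x y :: "nat \<Rightarrow> 'v \<Rightarrow> real"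
  assumes no_loops: "\<And>i. (i, i) \<notin> E"
    and strongly_connected: "\<And>i j. (i, j) \<in> E\<^sup>*"
    and q_lt: "qmin < qmax"
    and avg_range: "(\<Sum>i\<in>UNIV. y 0 i) / real (card (UNIV :: 'v set)) \<in> {qmin..qmax}"
    and a_init: "\<And>i j. a 0 i j = (if (j, i) \<in> E then 1 else 0)"
    and alpha_pos: "\<And>k. alpha k > 0"
    and alpha_noninc: "\<And>k. alpha (Suc k) \<le> alpha k"
    and alpha_not_summable: "\<not> summable alpha"
    and alpha_sq_summable: "summable (\<lambda>k. (alpha k)\<^sup>2)"
    and x_vals: "\<And>k i. x k i = qmin \<or> x k i = qmax"
    and x_max_possible: "\<And>k i. x k i = qmax \<Longrightarrow> quant_prob qmin qmax (y k i) > 0"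
    and x_min_possible: "\<And>k i. x k i = qmin \<Longrightarrow> quant_prob qmin qmax (y k i) < 1"
    and a_step: "\<And>k i j. (j, i) \<in> E \<Longrightarrow> a (Suc k) i j = a k i j + nind E a k j * gamma k"
    and y_step: "\<And>k i. y (Suc k) i = y k i
        + alpha k * (\<Sum>j\<in>in_nbrs E i. a k i j * (x k j - x k i))
        + alpha k * imbalance E a k i * x k i"
  shows "\<forall>i. \<exists>ymin ymax. \<forall>k. ymin \<le> y k i \<and> y k i \<le> ymax"
proof (cases "E = {}")
  case True
  have e1: "in_nbrs E i = {}" "out_nbrs E i = {}" for i using True by (auto simp: in_nbrs_def out_nbrs_def)
  have ysc: "y (Suc k) i = y k i" for k i
  proof -
    have "imbalance E a k i = 0" by (simp add: imbalance_def e1)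
    thus ?thesis using y_step[of k i] by (simp add: e1)
  qed
  have yc: "y k i = y 0 i" for k i
  proof (induction k)
    case (Suc k) thus ?case using ysc[of k i] by simp
  qed simp
  show ?thesis
  proof
    fix i show "\<exists>ymin ymax. \<forall>k. ymin \<le> y k i \<and> y k i \<le> ymax"
    proof (intro exI[of _ "y 0 i"] allI)
      fix k
      have "y k i = y 0 i" by (rule yc)
      thus "y 0 i \<le> y k i \<and> y k i \<le> y 0 i" by simp
    qed
  qed
next
  case False
  then obtain p q where pq: "(p,q) \<in> E" by auto
  have outne: "\<exists>j. (i,j) \<in> E" for i
  proof -
    have "p \<noteq> q" using no_loops pq by blast
    define t where "t = (if i = p then q else p)"
    have t: "t \<noteq> i" using \<open>p \<noteq> q\<close> by (auto simp: t_def)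
    have "(i,t) \<in> E\<^sup>*" by (rule strongly_connected)
    thus ?thesis using t(1) by (cases rule: converse_rtranclE) auto
  qed
  have dpos: "out_deg E i \<ge> 1" for i
  proof -
    obtain j where "(i,j) \<in> E" using outne by blast
    hence "out_nbrs E i \<noteq> {}" by (auto simp: out_nbrs_def)
    thus ?thesis unfolding out_deg_def by (simp add: Suc_le_eq card_gt_0_iff)
  qed
  obtain v where v: "\<forall>i. v i > 0" "\<forall>i. (\<Sum>j\<in>in_nbrs E i. v j) = real (out_deg E i) * v i"
    using kernel_vector[of E, OF strongly_connected] by blast
  interpret wb E a v
    by unfold_locales (use strongly_connected a_init a_step dpos v in auto)
  obtain A K where AK: "\<forall>k\<ge>K. Psi k \<le> A / (real k + 1)"
    using seq_bound[of Psi gamma Cst] Psi_nonneg Psi_mono gamma_bounds Psi_dich Cst_nonneg by blast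
  have Psi_le0: "Psi k \<le> Psi 0" for k
  proof (induction k)
    case (Suc k) thus ?case using Psi_mono[of k] by linarith
  qed simp
  have alpha_le0: "alpha k \<le> alpha 0" for k
  proof (induction k)
    case (Suc k) thus ?case using alpha_noninc[of k] by linarith
  qed simp
  have xle: "qmin \<le> x k j \<and> x k j \<le> qmax" for k j using x_vals[of k j] q_lt by auto
  define Q where "Q = \<bar>qmin\<bar> + \<bar>qmax\<bar>"
  have xQ: "\<bar>x k j\<bar> \<le> Q" for k j using x_vals[of k j] by (auto simp: Q_def)
  have x_hi: "x k j = qmax" if "y k j \<ge> qmax" for k j
  proof (rule ccontr)
    assume "x k j \<noteq> qmax"
    hence "x k j = qmin" using x_vals by blast
    hence "quant_prob qmin qmax (y k j) < 1" by (rule x_min_possible)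
    moreover have "clip qmin qmax (y k j) = qmax" using that q_lt by (simp add: clip_def)
    ultimately show False using q_lt by (simp add: quant_prob_def)
  qed
  have x_lo: "x k j = qmin" if "y k j \<le> qmin" for k j
  proof (rule ccontr)
    assume "x k j \<noteq> qmin"
    hence "x k j = qmax" using x_vals by blast
    hence "quant_prob qmin qmax (y k j) > 0" by (rule x_max_possible)
    moreover have "clip qmin qmax (y k j) = qmin" using that q_lt by (simp add: clip_def)
    ultimately show False using q_lt by (simp add: quant_prob_def)
  qed
  show ?thesis
  proof
    fix i
    define bb where "bb k = imbalance E a k i" for k
    define S where "S k = (\<Sum>j\<in>in_nbrs E i. a k i j * (x k j - x k i))" for k
    define inc where "inc k = alpha k * S k + alpha k * bb k * x k i" for k
    define \<beta> where "\<beta> k = alpha k * \<bar>bb k\<bar> * Q" for k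
    define M where "M = (\<Sum>j\<in>in_nbrs E i. R 0 * v j) * (2*Q) + (real (out_deg E i) + 1) * Psi 0 * Q"
    have ys: "y (Suc k) i = y k i + inc k" for k using y_step[of k i] by (simp add: inc_def S_def bb_def)
    have aW: "a k i j = W k j" if "j \<in> in_nbrs E i" for k j using that a_W by (simp add: in_nbrs_def)
    have Q0: "Q \<ge> 0" by (simp add: Q_def)
    have b0: "\<beta> k \<ge> 0" for k using alpha_pos[of k] Q0 by (simp add: \<beta>_def)
    have bbP: "\<bar>bb k\<bar> \<le> (real (out_deg E i) + 1) * Psi k" for k unfolding bb_def by (rule b_le_Psi)
    have sb: "summable \<beta>"
    proof -
      define c where "c = (real (out_deg E i) + 1) * \<bar>A\<bar> * Q"
      have c0: "c \<ge> 0" using Q0 by (simp add: c_def)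
      have sg: "summable (\<lambda>k. c * ((alpha k)\<^sup>2 + (1 / (real k + 1))\<^sup>2))"
        by (intro summable_mult summable_add alpha_sq_summable sq_summable)
      show ?thesis
      proof (rule summable_comparison_test'[OF sg])
        fix k assume kK: "k \<ge> K"
        have "norm (\<beta> k) = alpha k * \<bar>bb k\<bar> * Q" using b0[of k] by (simp add: \<beta>_def)
        also have "\<dots> \<le> alpha k * ((real (out_deg E i) + 1) * (\<bar>A\<bar> * (1 / (real k + 1)))) * Q"
        proof -
          have "A / (real k + 1) \<le> \<bar>A\<bar> / (real k + 1)" by (rule divide_right_mono) auto
          moreover have "Psi k \<le> A / (real k + 1)" using AK kK by simp
          ultimately have "Psi k \<le> \<bar>A\<bar> * (1 / (real k + 1))" by simp
          hence "(real (out_deg E i) + 1) * Psi k \<le> (real (out_deg E i) + 1) * (\<bar>A\<bar> * (1 / (real k + 1)))"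
            by (rule mult_left_mono) simp
          hence "\<bar>bb k\<bar> \<le> (real (out_deg E i) + 1) * (\<bar>A\<bar> * (1 / (real k + 1)))"
            using bbP[of k] by linarith
          thus ?thesis using alpha_pos[of k] Q0 by (intro mult_right_mono mult_left_mono) auto
        qed
        also have "\<dots> = c * (alpha k * (1 / (real k + 1)))" by (simp add: c_def algebra_simps add_divide_distrib)
        also have "\<dots> \<le> c * ((alpha k)\<^sup>2 + (1 / (real k + 1))\<^sup>2)"
          by (rule mult_left_mono[OF amgm_bound c0])
        finally show "norm (\<beta> k) \<le> c * ((alpha k)\<^sup>2 + (1 / (real k + 1))\<^sup>2)" .
      qed
    qed
    have incb: "\<bar>inc k\<bar> \<le> alpha 0 * M" for k
    proof -
      have "\<bar>S k\<bar> \<le> (\<Sum>j\<in>in_nbrs E i. \<bar>a k i j * (x k j - x k i)\<bar>)" unfolding S_def by (rule sum_abs)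
      also have "\<dots> \<le> (\<Sum>j\<in>in_nbrs E i. R 0 * v j * (2*Q))"
      proof (rule sum_mono)
        fix j assume j: "j \<in> in_nbrs E i"
        have "\<bar>a k i j\<bar> \<le> R 0 * v j" using aW[OF j] W_bound W_ge1[of k j] by simp
        moreover have "\<bar>x k j - x k i\<bar> \<le> 2*Q" using xQ[of k j] xQ[of k i] by linarith
        ultimately show "\<bar>a k i j * (x k j - x k i)\<bar> \<le> R 0 * v j * (2*Q)"
          unfolding abs_mult by (intro mult_mono) auto
      qed
      also have "\<dots> = (\<Sum>j\<in>in_nbrs E i. R 0 * v j) * (2*Q)" by (simp add: sum_distrib_right)
      finally have Sb: "\<bar>S k\<bar> \<le> (\<Sum>j\<in>in_nbrs E i. R 0 * v j) * (2*Q)" .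
      have "\<bar>bb k * x k i\<bar> \<le> (real (out_deg E i) + 1) * Psi 0 * Q"
      proof -
        have "\<bar>bb k\<bar> \<le> (real (out_deg E i) + 1) * Psi 0"
        proof -
          have "(real (out_deg E i) + 1) * Psi k \<le> (real (out_deg E i) + 1) * Psi 0"
            by (rule mult_left_mono[OF Psi_le0[of k]]) simp
          thus ?thesis using bbP[of k] by linarith
        qed
        thus ?thesis unfolding abs_mult using xQ[of k i] by (intro mult_mono) auto
      qed
      hence "\<bar>S k + bb k * x k i\<bar> \<le> M" using Sb unfolding M_def by linarith
      hence "\<bar>inc k\<bar> \<le> alpha k * M" using alpha_pos[of k]
        by (simp add: inc_def abs_mult distrib_left[symmetric] mult.assoc mult_left_mono)
      also have "\<dots> \<le> alpha 0 * M"
      proof -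
        have "M \<ge> 0" using \<open>\<bar>S k + bb k * x k i\<bar> \<le> M\<close> by linarith
        thus ?thesis using alpha_le0[of k] by (simp add: mult_right_mono)
      qed
      finally show ?thesis .
    qed
    have hi: "inc k \<le> \<beta> k" if "y k i \<ge> qmax" for k
    proof -
      have xi: "x k i = qmax" using x_hi[OF that] .
      have "S k \<le> 0" unfolding S_def
      proof (rule sum_nonpos)
        fix j assume j: "j \<in> in_nbrs E i"
        have "a k i j \<ge> 0" using aW[OF j] W_ge1[of k j] by simp
        moreover have "x k j - x k i \<le> 0" using xle[of k j] xi by simp
        ultimately show "a k i j * (x k j - x k i) \<le> 0" by (simp add: mult_nonneg_nonpos)
      qed
      hence "alpha k * S k \<le> 0" using alpha_pos[of k] by (simp add: mult_nonneg_nonpos)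
      moreover have "alpha k * bb k * x k i \<le> \<beta> k"
      proof -
        have "bb k * x k i \<le> \<bar>bb k * x k i\<bar>" by (rule abs_ge_self)
        also have "\<dots> \<le> \<bar>bb k\<bar> * Q" unfolding abs_mult using xQ[of k i] by (rule mult_left_mono) simp
        finally have "bb k * x k i \<le> \<bar>bb k\<bar> * Q" .
        thus ?thesis using alpha_pos[of k] by (simp add: \<beta>_def mult.assoc mult_left_mono)
      qed
      ultimately show ?thesis by (simp add: inc_def)
    qed
    have lo: "- inc k \<le> \<beta> k" if "- y k i \<ge> - qmin" for k
    proof -
      have xi: "x k i = qmin" using x_lo that by simp
      have "S k \<ge> 0" unfolding S_def
      proof (rule sum_nonneg)
        fix j assume j: "j \<in> in_nbrs E i"
        have "a k i j \<ge> 0" using aW[OF j] W_ge1[of k j] by simp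
        moreover have "x k j - x k i \<ge> 0" using xle[of k j] xi by simp
        ultimately show "a k i j * (x k j - x k i) \<ge> 0" by simp
      qed
      hence "alpha k * S k \<ge> 0" using alpha_pos[of k] by simp
      moreover have "- (alpha k * bb k * x k i) \<le> \<beta> k"
      proof -
        have "- (bb k * x k i) \<le> \<bar>bb k * x k i\<bar>" by (rule abs_ge_minus_self)
        also have "\<dots> \<le> \<bar>bb k\<bar> * Q" unfolding abs_mult using xQ[of k i] by (rule mult_left_mono) simp
        finally have "- (bb k * x k i) \<le> \<bar>bb k\<bar> * Q" .
        hence "alpha k * (- (bb k * x k i)) \<le> alpha k * (\<bar>bb k\<bar> * Q)"
          using alpha_pos[of k] by (intro mult_left_mono) auto
        thus ?thesis by (simp add: \<beta>_def mult.assoc)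
      qed
      ultimately show ?thesis by (simp add: inc_def)
    qed
    have up: "y k i \<le> max (y 0 i) (qmax + alpha 0 * M) + suminf \<beta>" for k
      by (rule y_upper_gen[where y="\<lambda>k. y k i" and inc=inc, OF ys hi _ b0 sb])
         (use incb in \<open>auto simp: abs_le_iff\<close>)
    have down: "- y k i \<le> max (- y 0 i) (- qmin + alpha 0 * M) + suminf \<beta>" for k
      by (rule y_upper_gen[where y="\<lambda>k. - y k i" and inc="\<lambda>k. - inc k", OF _ lo _ b0 sb])
         (use ys incb in \<open>auto simp: abs_le_iff\<close>)
    show "\<exists>ymin ymax. \<forall>k. ymin \<le> y k i \<and> y k i \<le> ymax"
    proof (intro exI allI conjI)
      fix k
      show "- (max (- y 0 i) (- qmin + alpha 0 * M) + suminf \<beta>) \<le> y k i" using down[of k] by linarith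
      show "y k i \<le> max (y 0 i) (qmax + alpha 0 * M) + suminf \<beta>" using up[of k] .
    qed
  qed
qed



end
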